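(* Let $z,\alpha,\beta,\delta\in\mathbb{C}$ with $\mathrm{Re}(\delta)>-1$ and $\mathrm{Re}(\beta)>-1$, let $q>0$, let $x\in\mathbb{R}$ with $|x|<q$, and let $v\in\mathbb{C}$ with $|v|<1$. Then $$\int_0^1t^\beta(1-t)^\delta(1-tv)^{-\alpha}\bigl(\zeta_E(z,q-xt)-\zeta_E(z,q)\bigr)\,dt=\sum_{j=1}^\infty\frac{\Gamma(z+j)}{\Gamma(z)\,j!}\,B(\beta+j+1,\delta+1)\;{}_2F_1(\alpha,\beta+j+1;\delta+\beta+j+2;v)\;\zeta_E(z+j,q)\,x^j,$$ where $\frac{\Gamma(z+j)}{\Gamma(z)}=z(z+1)\cdots(z+j-1)$.
   Context: For $q>0$, $\zeta_E(z,q)=\sum_{n=0}^\infty (-1)^n (n+q)^{-z}$ for $\mathrm{Re}(z)>0$, extended by analytic continuation to an entire function of $z$. $B(a,b)=\frac{\Gamma(a)\Gamma(b)}{\Gamma(a+b)}$ is the beta function and ${}_2F_1(a,b;c;v)=\sum_{n\ge0}\frac{(a)_n(b)_n}{(c)_n n!}v^n$ is the Gauss hypergeometric function, where $(a)_n=a(a+1)\cdots(a+n-1)$; $(1-tv)^{-\alpha}$ uses the principal branch. *)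

theory Defs
  imports "HOL-Analysis.Analysis"
begin

definition zeta_E :: "complex \<Rightarrow> real \<Rightarrow> complex" where
  "zeta_E z q =
     (THE f. f holomorphic_on UNIV \<and>
        (\<forall>w. 0 < Re w \<longrightarrow>
           (\<lambda>n. (-1) ^ n * complex_of_real (real n + q) powr (- w)) sums f w)) z"

definition hyp2F1 :: "complex \<Rightarrow> complex \<Rightarrow> complex \<Rightarrow> complex \<Rightarrow> complex" where
  "hyp2F1 a b c v =
     (\<Sum>n. pochhammer a n * pochhammer b n / (pochhammer c n * fact n) * v ^ n)"

end

theory Submission
  imports Defs "HOL-Complex_Analysis.Complex_Analysis"
begin

fun Dd :: "nat \<Rightarrow> complex \<Rightarrow> real \<Rightarrow> complex" where
  "Dd 0 z y = complex_of_real y powr (-z)"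
| "Dd (Suc k) z y = Dd k z (y + 1) - Dd k z y"

lemma mvt_vec:
  fixes f :: "real \<Rightarrow> 'a::real_normed_vector"
  assumes "a \<le> b" "\<And>x. x \<in> {a..b} \<Longrightarrow> (f has_vector_derivative f' x) (at x)"
    "\<And>x. x \<in> {a..b} \<Longrightarrow> norm (f' x) \<le> B"
  shows "norm (f b - f a) \<le> B * (b - a)"
proof -
  have "norm (f b - f a) \<le> B * norm (b - a)"
  proof (rule differentiable_bound[where S="{a..b}" and f'="\<lambda>x h. h *\<^sub>R f' x"])
    show "convex {a..b}" by simp
    show "(f has_derivative (\<lambda>h. h *\<^sub>R f' x)) (at x within {a..b})" if "x \<in> {a..b}" for x
      using assms(2)[OF that] unfolding has_vector_derivative_def
      by (rule has_derivative_at_withinI)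
    show "onorm (\<lambda>h. h *\<^sub>R f' x) \<le> B" if "x \<in> {a..b}" for x
    proof -
      have "onorm (\<lambda>h. h *\<^sub>R f' x) \<le> onorm (\<lambda>h::real. h) * norm (f' x)"
        by (rule onorm_scaleR_left_lemma) (rule bounded_linear_ident)
      also have "\<dots> = norm (f' x)" by (simp add: onorm_id)
      finally show ?thesis using assms(3)[OF that] by linarith
    qed
  qed (use assms in auto)
  thus ?thesis using assms(1) by simp
qed

lemma Dd_deriv:
  assumes "y > 0"
  shows "((\<lambda>y. Dd k z y) has_vector_derivative (- z * Dd k (z + 1) y)) (at y)"
  using assms
proof (induction k arbitrary: y)
  case 0
  have "((\<lambda>w. w powr (-z)) has_field_derivative (-z * complex_of_real y powr (-z - 1))) (at (complex_of_real y))"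
    by (rule has_field_derivative_powr) (use 0 in \<open>auto simp: complex_nonpos_Reals_iff\<close>)
  hence "((\<lambda>x. complex_of_real x powr (-z)) has_vector_derivative (-z * complex_of_real y powr (-z - 1))) (at y)"
    by (rule has_vector_derivative_real_field)
  moreover have "-(z+1) = -z - 1" by simp
  ultimately show ?case by (simp only: Dd.simps mult_minus_left)
next
  case (Suc k)
  have d1: "((\<lambda>y. Dd k z (y + 1)) has_vector_derivative (- z * Dd k (z + 1) (y + 1))) (at y)"
  proof -
    have "((\<lambda>y. y + 1) has_vector_derivative 1) (at y)"
      by (auto intro!: derivative_eq_intros)
    from vector_diff_chain_at[OF this Suc.IH[of "y+1"]] Suc.prems show ?thesis
      by (simp add: o_def)
  qed
  note d2 = Suc.IH[OF Suc.prems]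
  show ?case using has_vector_derivative_diff[OF d1 d2]
    by (simp add: algebra_simps)
qed

lemma Dd_bound:
  assumes "y > 0" "Re z + real k \<ge> 0"
  shows "norm (Dd k z y) \<le> (\<Prod>i<k. norm (z + of_nat i)) * y powr (-(Re z + real k))"
  using assms
proof (induction k arbitrary: z y)
  case 0
  thus ?case by (simp add: norm_powr_real_powr)
next
  case (Suc k)
  define B where "B = norm z * (\<Prod>i<k. norm (z + 1 + of_nat i)) * y powr (-(Re z + 1 + real k))"
  have "norm (Dd k z (y + 1) - Dd k z y) \<le> B * ((y + 1) - y)"
  proof (rule mvt_vec[where f' = "\<lambda>s. - z * Dd k (z + 1) s"])
    show "(Dd k z has_vector_derivative - z * Dd k (z + 1) x) (at x)" if "x \<in> {y..y+1}" for x
      using Dd_deriv[of x k z] that Suc.prems by auto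
    show "norm (- z * Dd k (z + 1) x) \<le> B" if "x \<in> {y..y+1}" for x
    proof -
      have x: "x > 0" "x \<ge> y" using that Suc.prems by auto
      have "norm (Dd k (z + 1) x) \<le> (\<Prod>i<k. norm (z + 1 + of_nat i)) * x powr (-(Re (z + 1) + real k))"
        by (rule Suc.IH) (use x Suc.prems in auto)
      also have "\<dots> \<le> (\<Prod>i<k. norm (z + 1 + of_nat i)) * y powr (-(Re z + 1 + real k))"
      proof (intro mult_left_mono prod_nonneg norm_ge_zero)
        show "x powr (-(Re (z + 1) + real k)) \<le> y powr (-(Re z + 1 + real k))"
          using powr_mono2'[of "-(Re z + 1 + real k)" y x] x Suc.prems by simp
      qed
      finally show ?thesis unfolding B_def norm_mult norm_minus_cancel
        by (simp add: mult.assoc mult_left_mono)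
    qed
  qed simp
  also have "B * ((y + 1) - y) = B" by simp
  also have "B = (\<Prod>i<Suc k. norm (z + of_nat i)) * y powr (-(Re z + real (Suc k)))"
    unfolding B_def prod.lessThan_Suc_shift by (simp add: algebra_simps)
  finally show ?case by simp
qed

lemma Dd_tendsto:
  assumes "Re z + real k > 0"
  shows "(\<lambda>n. Dd k z (real n + q)) \<longlonglongrightarrow> 0"
proof -
  define P where "P = (\<Prod>i<k. norm (z + of_nat i))"
  have lim: "(\<lambda>n. P * (real n + q) powr (-(Re z + real k))) \<longlonglongrightarrow> P * 0"
  proof (intro tendsto_mult tendsto_const)
    have "filterlim (\<lambda>n. real n + q) at_top sequentially"
      using filterlim_tendsto_add_at_top[OF tendsto_const[of q] filterlim_real_sequentially]
      by (simp add: add.commute)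
    thus "(\<lambda>n. (real n + q) powr (-(Re z + real k))) \<longlonglongrightarrow> 0"
      by (rule tendsto_neg_powr[rotated]) (use assms in auto)
  qed
  have ev: "eventually (\<lambda>n. norm (Dd k z (real n + q)) \<le> P * (real n + q) powr (-(Re z + real k))) sequentially"
  proof -
    have "eventually (\<lambda>n. real n + q > 0) sequentially"
      using filterlim_real_sequentially[THEN filterlim_tendsto_add_at_top[OF tendsto_const[of q]]]
      by (simp add: filterlim_at_top_dense add.commute)
    thus ?thesis by eventually_elim (unfold P_def, rule Dd_bound, use assms in auto)
  qed
  show ?thesis
    by (rule Lim_null_comparison[OF ev]) (use lim in simp)
qed

lemma summable_powr_shift:
  assumes "q > 0" "c > 1"
  shows "summable (\<lambda>n. (real n + q) powr (-c))"
proof (rule summable_comparison_test_ev)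
  show "summable (\<lambda>n. real n powr (-c))"
    by (subst summable_real_powr_iff) (use assms in auto)
  show "eventually (\<lambda>n. norm ((real n + q) powr (-c)) \<le> real n powr (-c)) sequentially"
    using eventually_gt_at_top[of "0::nat"]
    by eventually_elim (use assms in \<open>auto intro!: powr_mono2'\<close>)
qed

lemma Dd_summable:
  assumes "q > 0" "Re z + real k > 1"
  shows "summable (\<lambda>n. norm (Dd k z (real n + q)))"
proof (rule summable_comparison_test)
  show "\<exists>N. \<forall>n\<ge>N. norm (norm (Dd k z (real n + q))) \<le> (\<Prod>i<k. norm (z + of_nat i)) * (real n + q) powr (-(Re z + real k))"
    using Dd_bound[of "real _ + q" z k] assms by auto
  show "summable (\<lambda>n. (\<Prod>i<k. norm (z + of_nat i)) * (real n + q) powr (-(Re z + real k)))"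
    by (intro summable_mult summable_powr_shift) (use assms in auto)
qed

lemma alt_step:
  fixes f :: "nat \<Rightarrow> complex"
  assumes lim: "f \<longlonglongrightarrow> 0" and s: "(\<lambda>n. (-1)^n * (f (Suc n) - f n)) sums s"
  shows "(\<lambda>n. (-1)^n * f n) sums ((f 0 - s) / 2)"
proof -
  have eq: "(\<Sum>n<M. (-1)^n * (f (Suc n) - f n)) = - 2 * (\<Sum>n<M. (-1)^n * f n) + f 0 - (-1)^M * f M" for M
    by (induction M) (auto simp: algebra_simps)
  have "(\<lambda>M. (f 0 - (-1)^M * f M - (\<Sum>n<M. (-1)^n * (f (Suc n) - f n))) / 2) \<longlonglongrightarrow> (f 0 - 0 - s) / 2"
  proof (intro tendsto_intros)
    show "(\<lambda>M. (-1)^M * f M) \<longlonglongrightarrow> 0"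
      by (rule tendsto_norm_zero_cancel) (use tendsto_norm_zero[OF lim] in \<open>simp add: norm_mult norm_power\<close>)
    show "(\<lambda>M. \<Sum>n<M. (-1)^n * (f (Suc n) - f n)) \<longlonglongrightarrow> s"
      using s by (simp add: sums_def)
  qed simp
  moreover have "(f 0 - (-1)^M * f M - (\<Sum>n<M. (-1)^n * (f (Suc n) - f n))) / 2 = (\<Sum>n<M. (-1)^n * f n)" for M
    unfolding eq by simp
  ultimately show ?thesis by (simp add: sums_def)
qed

definition GN :: "real \<Rightarrow> nat \<Rightarrow> complex \<Rightarrow> complex" where
  "GN q N z = (\<Sum>k<N. (-1)^k * Dd k z q / 2^(k+1)) + (-1)^N / 2^N * (\<Sum>n. (-1)^n * Dd N z (real n + q))"

lemma summable_alt_Dd: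
  assumes "q > 0" "Re z + real k > 1"
  shows "summable (\<lambda>n. (-1)^n * Dd k z (real n + q))"
  by (rule summable_norm_cancel) (use Dd_summable[OF assms] in \<open>simp add: norm_mult norm_power\<close>)

lemma GN_Suc:
  assumes "q > 0" "Re z + real N > 1"
  shows "GN q (Suc N) z = GN q N z"
proof -
  define f where "f = (\<lambda>n. Dd N z (real n + q))"
  define s where "s = (\<Sum>n. (-1)^n * Dd (Suc N) z (real n + q))"
  have fs: "f (Suc n) - f n = Dd (Suc N) z (real n + q)" for n
    by (simp add: f_def algebra_simps)
  have "(\<lambda>n. (-1)^n * (f (Suc n) - f n)) sums s"
    unfolding fs s_def by (rule summable_sums, rule summable_alt_Dd) (use assms in auto)
  moreover have "f \<longlonglongrightarrow> 0" unfolding f_def by (rule Dd_tendsto) (use assms in auto)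
  ultimately have "(\<lambda>n. (-1)^n * f n) sums ((f 0 - s) / 2)"
    by (intro alt_step)
  hence h: "(\<Sum>n. (-1)^n * Dd N z (real n + q)) = (Dd N z q - s) / 2"
    by (simp add: f_def sums_iff)
  show ?thesis unfolding GN_def sum.lessThan_Suc s_def[symmetric] h
    by (simp add: field_simps)
qed

lemma GN_mono_eq:
  assumes "q > 0" "Re z + real N > 1" "N \<le> M"
  shows "GN q M z = GN q N z"
  using assms(3)
proof (induction M rule: dec_induct)
  case (step m)
  have "GN q (Suc m) z = GN q m z" by (rule GN_Suc) (use assms step in auto)
  with step show ?case by simp
qed simp

lemma Dd_holo: "(\<lambda>z. Dd k z y) holomorphic_on A"
  by (induction k arbitrary: y) (auto intro!: holomorphic_intros)

lemma GN_holo: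
  assumes "q > 0"
  shows "GN q N holomorphic_on {z. Re z > 1 - real N}"
proof -
  define S where "S = {z. Re z > 1 - real N}"
  have oS: "open S" unfolding S_def by (rule open_halfspace_Re_gt)
  have "(\<lambda>z. \<Sum>n. (-1)^n * Dd N z (real n + q)) holomorphic_on S"
  proof (rule holomorphic_uniform_sequence[OF oS])
    show "(\<lambda>z. \<Sum>i<n. (-1)^i * Dd N z (real i + q)) holomorphic_on S" for n
      by (intro holomorphic_intros Dd_holo)
    fix x assume x: "x \<in> S"
    define d where "d = (Re x - (1 - real N)) / 2"
    have d: "d > 0" using x by (simp add: S_def d_def)
    have sub: "cball x d \<subseteq> S"
    proof
      fix z assume "z \<in> cball x d"
      hence "norm (x - z) \<le> d" by (simp add: dist_norm)
      hence "Re (x - z) \<le> d" using complex_Re_le_cmod[of "x - z"] by linarith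
      thus "z \<in> S" using d by (simp add: S_def d_def)
    qed
    define \<sigma> where "\<sigma> = Re x + real N - d"
    have "Re x > 1 - real N" using x by (simp add: S_def)
    moreover have "\<sigma> = (Re x + real N + 1) / 2" unfolding \<sigma>_def d_def by (simp add: field_simps)
    ultimately have \<sigma>: "\<sigma> > 1" by (simp add: field_simps)
    define P where "P = (\<Prod>i<N. norm x + d + real i)"
    define M where "M = (\<lambda>n. P * (real n + q) powr (-\<sigma>))"
    have "uniform_limit (cball x d) (\<lambda>n z. \<Sum>i<n. (-1)^i * Dd N z (real i + q))
            (\<lambda>z. \<Sum>i. (-1)^i * Dd N z (real i + q)) sequentially"
    proof (rule Weierstrass_m_test_ev)
      show "summable M" unfolding M_def
        by (intro summable_mult summable_powr_shift) (use assms \<sigma> in auto)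
      show "eventually (\<lambda>n. \<forall>z\<in>cball x d. norm ((-1)^n * Dd N z (real n + q)) \<le> M n) sequentially"
        using eventually_ge_at_top[of "1::nat"]
      proof eventually_elim
        case (elim n)
        show ?case
        proof
          fix z assume z: "z \<in> cball x d"
          have nz: "norm (x - z) \<le> d" using z by (simp add: dist_norm)
          have Rez: "Re z \<ge> Re x - d" using complex_Re_le_cmod[of "x - z"] nz by simp
          have "norm ((-1)^n * Dd N z (real n + q)) = norm (Dd N z (real n + q))"
            by (simp add: norm_mult norm_power)
          also have "\<dots> \<le> (\<Prod>i<N. norm (z + of_nat i)) * (real n + q) powr (-(Re z + real N))"
            by (rule Dd_bound) (use assms Rez \<sigma> in \<open>auto simp: \<sigma>_def\<close>)
          also have "\<dots> \<le> P * (real n + q) powr (-\<sigma>)"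
          proof (intro mult_mono)
            show "(\<Prod>i<N. norm (z + of_nat i)) \<le> P" unfolding P_def
            proof (intro prod_mono conjI)
              fix i assume "i \<in> {..<N}"
              have "norm (z + of_nat i) \<le> norm z + real i"
                using norm_triangle_ineq[of z "of_nat i"] by simp
              also have "norm z \<le> norm x + d"
                using norm_triangle_ineq4[of x "x - z"] nz by (simp add: norm_minus_commute)
              finally show "norm (z + of_nat i) \<le> norm x + d + real i" by simp
            qed simp
            show "(real n + q) powr (-(Re z + real N)) \<le> (real n + q) powr (-\<sigma>)"
              by (rule powr_mono) (use elim Rez assms in \<open>auto simp: \<sigma>_def\<close>)
          qed (use d in \<open>auto simp: P_def intro!: prod_nonneg add_nonneg_nonneg\<close>)
          finally show "norm ((-1)^n * Dd N z (real n + q)) \<le> M n" by (simp add: M_def)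
        qed
      qed
    qed
    thus "\<exists>d>0. cball x d \<subseteq> S \<and> uniform_limit (cball x d) (\<lambda>n z. \<Sum>i<n. (-1)^i * Dd N z (real i + q))
            (\<lambda>z. \<Sum>i. (-1)^i * Dd N z (real i + q)) sequentially"
      using d sub by blast
  qed
  thus ?thesis unfolding GN_def[abs_def] S_def
    by (intro holomorphic_intros Dd_holo) auto
qed

definition Gq :: "real \<Rightarrow> complex \<Rightarrow> complex" where
  "Gq q z = GN q (nat \<lceil>2 - Re z\<rceil>) z"

lemma Gq_eq:
  assumes "q > 0" "Re z + real N > 1"
  shows "Gq q z = GN q N z"
proof -
  define N0 where "N0 = nat \<lceil>2 - Re z\<rceil>"
  have N0: "Re z + real N0 > 1" unfolding N0_def by linarith
  have "Gq q z = GN q N0 z" by (simp add: Gq_def N0_def)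
  also have "\<dots> = GN q (max N N0) z" by (rule GN_mono_eq[symmetric]) (use assms N0 in auto)
  also have "\<dots> = GN q N z" by (rule GN_mono_eq) (use assms in auto)
  finally show ?thesis .
qed

lemma Gq_holo:
  assumes "q > 0"
  shows "Gq q holomorphic_on UNIV"
proof -
  have "Gq q field_differentiable (at z0)" for z0
  proof -
    define N where "N = nat \<lceil>2 - Re z0\<rceil>"
    define S where "S = {z. Re z > 1 - real N}"
    have eq: "GN q N z = Gq q z" if "z \<in> {z. Re z > 1 - real N}" for z
    proof -
      have "1 < Re z + real N" using that by simp
      thus ?thesis using Gq_eq[OF assms, of z N] by simp
    qed
    have "Gq q holomorphic_on S" unfolding S_def
      by (rule holomorphic_transform[OF GN_holo[OF assms, of N]]) (rule eq)
    moreover have "open S" unfolding S_def by (rule open_halfspace_Re_gt)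
    moreover have "Re z0 + real N > 1" unfolding N_def by linarith
    hence "z0 \<in> S" unfolding S_def by simp
    ultimately show ?thesis by (rule holomorphic_on_imp_differentiable_at)
  qed
  thus ?thesis by (simp add: holomorphic_on_def)
qed

lemma Gq_sums:
  assumes "q > 0" "Re w > 0"
  shows "(\<lambda>n. (-1)^n * complex_of_real (real n + q) powr (-w)) sums Gq q w"
proof -
  define f where "f = (\<lambda>n. Dd 0 w (real n + q))"
  define s where "s = (\<Sum>n. (-1)^n * Dd 1 w (real n + q))"
  have fs: "f (Suc n) - f n = Dd 1 w (real n + q)" for n
    by (simp add: f_def algebra_simps)
  have "(\<lambda>n. (-1)^n * (f (Suc n) - f n)) sums s"
    unfolding fs s_def by (rule summable_sums, rule summable_alt_Dd) (use assms in auto)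
  moreover have "f \<longlonglongrightarrow> 0" unfolding f_def by (rule Dd_tendsto) (use assms in auto)
  ultimately have "(\<lambda>n. (-1)^n * f n) sums ((f 0 - s) / 2)"
    by (intro alt_step)
  moreover have B: "Gq q w = GN q 1 w" by (rule Gq_eq) (use assms in auto)
  moreover have C: "GN q 1 w = (f 0 - s) / 2" by (simp add: GN_def f_def s_def field_simps)
  ultimately have "(\<lambda>n. (-1)^n * f n) sums Gq q w" unfolding B C by simp
  thus ?thesis by (simp only: f_def Dd.simps)
qed

lemma zeta_E_Gq:
  assumes "q > 0"
  shows "zeta_E z q = Gq q z"
proof -
  let ?P = "\<lambda>f. f holomorphic_on UNIV \<and>
        (\<forall>w. 0 < Re w \<longrightarrow> (\<lambda>n. (-1) ^ n * complex_of_real (real n + q) powr (- w)) sums f w)"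
  have "(THE f. ?P f) = Gq q"
  proof (rule the_equality)
    show "?P (Gq q)" using Gq_holo[OF assms] Gq_sums[OF assms] by auto
    fix f assume f: "?P f"
    show "f = Gq q"
    proof
      fix w
      have "(\<lambda>z. f z - Gq q z) w = 0"
      proof (rule analytic_continuation[of "\<lambda>z. f z - Gq q z" UNIV "{z. Re z > 0}" 1])
        show "(\<lambda>z. f z - Gq q z) holomorphic_on UNIV"
          using f Gq_holo[OF assms] by (intro holomorphic_intros) auto
        show "1 islimpt {z. Re z > 0}"
          by (rule open_imp_islimpt) (auto intro: open_halfspace_Re_gt)
        show "f z - Gq q z = 0" if "z \<in> {z. Re z > 0}" for z
          using f Gq_sums[OF assms, of z] that sums_unique2 by auto
      qed auto
      thus "f w = Gq q w" by simp
    qed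
  qed
  thus ?thesis unfolding zeta_E_def by simp
qed

lemma zeta_E_holo:
  assumes "q > 0"
  shows "(\<lambda>z. zeta_E z q) holomorphic_on A"
  using holomorphic_on_subset[OF Gq_holo[OF assms]] zeta_E_Gq[OF assms] by auto

lemma zeta_E_sums:
  assumes "q > 0" "Re w > 0"
  shows "(\<lambda>n. (-1)^n * complex_of_real (real n + q) powr (-w)) sums zeta_E w q"
  using Gq_sums[OF assms] zeta_E_Gq[OF assms(1)] by simp

lemma zeta_E_holo':
  assumes "q > 0" "f holomorphic_on A"
  shows "(\<lambda>z. zeta_E (f z) q) holomorphic_on A"
  using holomorphic_on_compose[OF assms(2) zeta_E_holo[OF assms(1), of "f ` A"]]
  by (simp add: o_def)

lemma norm_pochhammer_le: "norm (pochhammer (z::complex) j) \<le> pochhammer (norm z) j"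
  unfolding pochhammer_prod prod_norm[symmetric]
proof (intro prod_mono conjI norm_ge_zero)
  fix i assume "i \<in> {0..<j}"
  show "norm (z + of_nat i) \<le> norm z + of_nat i"
    using norm_triangle_ineq[of z "of_nat i"] by simp
qed

lemma pochhammer_real_nonneg: "(r::real) \<ge> 0 \<Longrightarrow> pochhammer r j \<ge> 0"
  unfolding pochhammer_prod by (intro prod_nonneg) auto

lemma pochhammer_real_mono: "0 \<le> (r::real) \<Longrightarrow> r \<le> s \<Longrightarrow> pochhammer r j \<le> pochhammer s j"
  unfolding pochhammer_prod by (intro prod_mono) auto

lemma binom_series_summable:
  fixes R r :: real
  assumes "0 \<le> r" "r < 1"
  shows "(\<lambda>j. pochhammer R j / fact j * r ^ j) sums ((1 - r) powr (-R))"
proof -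
  have "(\<lambda>j. ((-R) gchoose j) * (-r)^j) sums ((1 + (-r)) powr (-R))"
    by (rule gen_binomial_real) (use assms in auto)
  moreover have "((-R) gchoose j) * (-r)^j = pochhammer R j / fact j * r ^ j" for j
    by (simp add: gbinomial_pochhammer power_mult_distrib[symmetric] field_simps)
  ultimately show ?thesis by simp
qed

lemma zeta_E_bound:
  assumes "q > 0" "Re w \<ge> 2"
  shows "norm (zeta_E w q) \<le> q powr (-Re w) * (q powr 2 * (\<Sum>n. (real n + q) powr (-2)))"
proof -
  have sum2: "summable (\<lambda>n. (real n + q) powr (-2))"
    by (rule summable_powr_shift) (use assms in auto)
  have nrm: "norm ((-1)^n * complex_of_real (real n + q) powr (-w)) = (real n + q) powr (-Re w)" for n
    using assms by (simp add: norm_mult norm_power norm_powr_real_powr)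
  have sumw: "summable (\<lambda>n. (real n + q) powr (-Re w))"
    by (rule summable_powr_shift) (use assms in auto)
  have le: "(real n + q) powr (-Re w) \<le> q powr (-Re w) * (q powr 2 * (real n + q) powr (-2))" for n
  proof -
    have "(real n + q) powr (-Re w) = q powr (-Re w) * ((real n + q) / q) powr (-Re w)"
      using assms by (simp add: powr_divide field_simps powr_minus)
    also have "((real n + q) / q) powr (-Re w) \<le> ((real n + q) / q) powr (-2)"
      by (rule powr_mono) (use assms in auto)
    also have "((real n + q) / q) powr (-2) = q powr 2 * (real n + q) powr (-2)"
      using assms by (simp add: powr_divide powr_minus field_simps)
    finally show ?thesis using assms by (simp add: mult_left_mono)
  qed
  have "norm (zeta_E w q) = norm (\<Sum>n. (-1)^n * complex_of_real (real n + q) powr (-w))"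
    using zeta_E_sums[of q w] assms by (simp add: sums_iff)
  also have "\<dots> \<le> (\<Sum>n. norm ((-1)^n * complex_of_real (real n + q) powr (-w)))"
    by (rule summable_norm) (unfold nrm, rule sumw)
  also have "\<dots> = (\<Sum>n. (real n + q) powr (-Re w))" by (simp only: nrm)
  also have "\<dots> \<le> (\<Sum>n. q powr (-Re w) * (q powr 2 * (real n + q) powr (-2)))"
    by (intro suminf_le le sumw summable_mult sum2)
  also have "\<dots> = q powr (-Re w) * (q powr 2 * (\<Sum>n. (real n + q) powr (-2)))"
    by (subst suminf_mult[OF summable_mult[OF sum2]], subst suminf_mult[OF sum2]) simp
  finally show ?thesis .
qed

definition tz :: "real \<Rightarrow> real \<Rightarrow> complex \<Rightarrow> nat \<Rightarrow> complex" where
  "tz q u z j = pochhammer z j / fact j * complex_of_real u ^ j * zeta_E (z + of_nat j) q"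

lemma tz_uniform:
  assumes "q > 0" "\<bar>u\<bar> < q"
  obtains M where "summable M"
    "eventually (\<lambda>j. \<forall>z\<in>cball z0 1. \<forall>u'. \<bar>u'\<bar> \<le> \<bar>u\<bar> \<longrightarrow> norm (tz q u' z j) \<le> M j) sequentially"
proof -
  define K where "K = q powr 2 * (\<Sum>n. (real n + q) powr (-2))"
  define Q where "Q = q powr (-(Re z0 - 1)) + q powr (-(Re z0 + 1))"
  define R where "R = norm z0 + 1"
  define r where "r = \<bar>u\<bar> / q"
  have r: "0 \<le> r" "r < 1" using assms by (auto simp: r_def)
  have K: "K \<ge> 0" unfolding K_def
    by (intro mult_nonneg_nonneg suminf_nonneg summable_powr_shift) (use assms in auto)
  define M where "M = (\<lambda>j. K * Q * (pochhammer R j / fact j * r ^ j))"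
  have "summable M" unfolding M_def
    by (intro summable_mult sums_summable[OF binom_series_summable[OF r]])
  moreover have "eventually (\<lambda>j. \<forall>z\<in>cball z0 1. \<forall>u'. \<bar>u'\<bar> \<le> \<bar>u\<bar> \<longrightarrow> norm (tz q u' z j) \<le> M j) sequentially"
    using eventually_ge_at_top[of "nat \<lceil>3 - Re z0\<rceil>"]
  proof eventually_elim
    case (elim j)
    show ?case
    proof (intro ballI allI impI)
      fix z u' assume z: "z \<in> cball z0 1" and u': "\<bar>u'\<bar> \<le> \<bar>u\<bar>"
      have nz: "norm (z0 - z) \<le> 1" using z by (simp add: dist_norm)
      have Rez: "Re z \<ge> Re z0 - 1" "Re z \<le> Re z0 + 1"
        using complex_Re_le_cmod[of "z0 - z"] complex_Re_le_cmod[of "z - z0"] nz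
        by (auto simp: norm_minus_commute)
      have normz: "norm z \<le> R"
        using norm_triangle_ineq4[of z0 "z0 - z"] nz by (simp add: R_def norm_minus_commute)
      have j: "real j \<ge> 3 - Re z0" using elim by linarith
      have Rew: "Re (z + of_nat j) \<ge> 2" using j Rez by simp
      have "norm (tz q u' z j) = norm (pochhammer z j) / fact j * \<bar>u'\<bar> ^ j * norm (zeta_E (z + of_nat j) q)"
        by (simp add: tz_def norm_mult norm_divide norm_power)
      also have "\<dots> \<le> pochhammer R j / fact j * \<bar>u\<bar> ^ j * (q powr (-Re (z + of_nat j)) * K)"
      proof (intro mult_mono divide_right_mono power_mono)
        show "norm (pochhammer z j) \<le> pochhammer R j"
          using norm_pochhammer_le[of z j] pochhammer_real_mono[OF norm_ge_zero normz, of j] by linarith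
        show "norm (zeta_E (z + of_nat j) q) \<le> q powr (-Re (z + of_nat j)) * K"
          using zeta_E_bound[OF assms(1) Rew] by (simp add: K_def)
      qed (use u' R_def in \<open>auto intro!: pochhammer_real_nonneg mult_nonneg_nonneg divide_nonneg_nonneg\<close>)
      also have "q powr (-Re (z + of_nat j)) = q powr (-Re z) / q ^ j"
        using assms by (simp add: powr_diff powr_realpow[symmetric] powr_minus field_simps)
      also have "q powr (-Re z) \<le> Q"
      proof (cases "q \<ge> 1")
        case True
        have "q powr (-Re z) \<le> q powr (-(Re z0 - 1))" by (rule powr_mono) (use Rez True in auto)
        thus ?thesis unfolding Q_def by (smt (verit) powr_ge_zero)
      next
        case False
        have "q powr (-Re z) \<le> q powr (-(Re z0 + 1))" by (rule powr_mono') (use Rez False assms in auto)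
        thus ?thesis unfolding Q_def by (smt (verit) powr_ge_zero)
      qed
      hence "pochhammer R j / fact j * \<bar>u\<bar> ^ j * (q powr (-Re z) / q ^ j * K)
              \<le> pochhammer R j / fact j * \<bar>u\<bar> ^ j * (Q / q ^ j * K)"
        using assms K by (intro mult_left_mono mult_right_mono divide_right_mono)
                         (auto intro!: pochhammer_real_nonneg mult_nonneg_nonneg divide_nonneg_nonneg simp: R_def)
      also have "\<dots> = M j"
        using assms by (simp add: M_def r_def power_divide field_simps)
      finally show "norm (tz q u' z j) \<le> M j" .
    qed
  qed
  ultimately show ?thesis using that by blast
qed

lemma tz_summable:
  assumes "q > 0" "\<bar>u\<bar> < q"
  shows "summable (\<lambda>j. norm (tz q u z j))"
proof -
  obtain M where M: "summable M"
    "eventually (\<lambda>j. \<forall>z'\<in>cball z 1. \<forall>u'. \<bar>u'\<bar> \<le> \<bar>u\<bar> \<longrightarrow> norm (tz q u' z' j) \<le> M j) sequentially"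
    using tz_uniform[OF assms, of z] by blast
  show ?thesis
    by (rule summable_comparison_test_ev[OF _ M(1)]) (use M(2) in \<open>eventually_elim, auto\<close>)
qed

lemma tz_holo:
  assumes "q > 0" "\<bar>u\<bar> < q"
  shows "(\<lambda>z. \<Sum>j. tz q u z j) holomorphic_on UNIV"
proof (rule holomorphic_uniform_sequence[OF open_UNIV])
  show "(\<lambda>z. \<Sum>i<n. tz q u z i) holomorphic_on UNIV" for n
    unfolding tz_def by (intro holomorphic_intros zeta_E_holo' assms) auto
  fix x :: complex
  obtain M where M: "summable M"
    "eventually (\<lambda>j. \<forall>z'\<in>cball x 1. \<forall>u'. \<bar>u'\<bar> \<le> \<bar>u\<bar> \<longrightarrow> norm (tz q u' z' j) \<le> M j) sequentially"
    using tz_uniform[OF assms, of x] by blast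
  have "uniform_limit (cball x 1) (\<lambda>n z. \<Sum>i<n. tz q u z i) (\<lambda>z. \<Sum>i. tz q u z i) sequentially"
    by (rule Weierstrass_m_test_ev[OF _ M(1)]) (use M(2) in \<open>eventually_elim, auto\<close>)
  thus "\<exists>d>0. cball x d \<subseteq> UNIV \<and> uniform_limit (cball x d) (\<lambda>n z. \<Sum>i<n. tz q u z i) (\<lambda>z. \<Sum>i. tz q u z i) sequentially"
    by (intro exI[of _ 1]) auto
qed

lemma double_sum_swap:
  fixes a :: "nat \<Rightarrow> nat \<Rightarrow> complex"
  assumes A: "\<And>n. (\<lambda>j. a n j) sums A n" and B: "\<And>j. (\<lambda>n. a n j) sums B j"
    and n1: "\<And>n. summable (\<lambda>j. norm (a n j))" and n2: "\<And>j. summable (\<lambda>n. norm (a n j))"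
    and n3: "summable (\<lambda>n. \<Sum>j. norm (a n j))"
  shows "B sums (\<Sum>n. A n)"
proof -
  have "(\<lambda>(n,j). norm (a n j)) summable_on Sigma UNIV (\<lambda>_. UNIV)"
  proof (rule summable_on_SigmaI)
    show "((\<lambda>j. case (n, j) of (n, j) \<Rightarrow> norm (a n j)) has_sum (\<Sum>j. norm (a n j))) UNIV" for n
      using sums_nonneg_imp_has_sum[OF summable_sums[OF n1[of n]]] by simp
    show "(\<lambda>n. \<Sum>j. norm (a n j)) summable_on UNIV"
      by (subst summable_on_UNIV_nonneg_real_iff) (auto intro!: suminf_nonneg n1 n3)
  qed auto
  hence "(\<lambda>p. norm (case p of (n,j) \<Rightarrow> a n j)) summable_on UNIV \<times> UNIV"
    by (simp add: case_prod_unfold)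
  hence "(\<lambda>(n,j). a n j) summable_on UNIV \<times> UNIV"
    by (rule abs_summable_summable)
  then obtain S where S: "((\<lambda>(n,j). a n j) has_sum S) (UNIV \<times> UNIV)"
    by (auto simp: summable_on_def)
  have "(A has_sum S) UNIV"
    by (rule has_sum_Sigma'[OF S]) (use norm_summable_imp_has_sum[OF n1 A] in simp)
  hence "A sums S" by (rule has_sum_imp_sums)
  hence SA: "S = (\<Sum>n. A n)" by (simp add: sums_iff)
  have S': "((\<lambda>(j,n). a n j) has_sum S) (UNIV \<times> UNIV)"
    using S by (subst (asm) has_sum_swap) (simp add: case_prod_unfold)
  have "(B has_sum S) UNIV"
    by (rule has_sum_Sigma'[OF S']) (use norm_summable_imp_has_sum[OF n2 B] in simp)
  hence "B sums S" by (rule has_sum_imp_sums)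
  thus ?thesis using SA by simp
qed

lemma gchoose_neg_pochhammer: "((- z :: complex) gchoose j) * w ^ j = pochhammer z j / fact j * (- w) ^ j"
proof -
  have "((- z) gchoose j) * w ^ j = pochhammer z j / fact j * ((-1) ^ j * w ^ j)"
    by (simp add: gbinomial_pochhammer)
  also have "(-1) ^ j * w ^ j = (- w) ^ j" by (simp add: power_mult_distrib[symmetric])
  finally show ?thesis .
qed

lemma taylor_Re_gt1:
  assumes q: "q > 0" and u: "\<bar>u\<bar> < q" and z: "Re z > 1"
  shows "(\<lambda>j. tz q u z j) sums zeta_E z (q - u)"
proof -
  define a where "a = (\<lambda>n j. (-1)^n * (((-z) gchoose j) * complex_of_real (real n + q) powr (-z - of_nat j)
                            * complex_of_real (-u) ^ j))"
  define A where "A = (\<lambda>n. (-1)^n * complex_of_real (real n + (q - u)) powr (-z))"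
  define Bj where "Bj = (\<lambda>j. ((-z) gchoose j) * complex_of_real (-u) ^ j * zeta_E (z + of_nat j) q)"
  define r where "r = \<bar>u\<bar> / q"
  have r: "0 \<le> r" "r < 1" using q u by (auto simp: r_def)
  define E where "E = (1 - r) powr (- norm z)"
  define b where "b = (\<lambda>n j. (real n + q) powr (-Re z) * (pochhammer (norm z) j / fact j * r ^ j))"
  have Esum: "(\<lambda>j. pochhammer (norm z) j / fact j * r ^ j) sums E"
    unfolding E_def by (rule binom_series_summable[OF r])
  have bsum: "(\<lambda>j. b n j) sums ((real n + q) powr (-Re z) * E)" for n
    unfolding b_def by (intro sums_mult Esum)
  have sumRe: "summable (\<lambda>n. (real n + q) powr (-Re z))"
    by (rule summable_powr_shift) (use q z in auto)
  have ab: "norm (a n j) \<le> b n j" for n j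
  proof -
    have nq: "real n + q > 0" "real n + q \<ge> q" using q by auto
    have "norm (a n j) = norm ((-z) gchoose j) * ((real n + q) powr (-Re z - real j)) * \<bar>u\<bar> ^ j"
      using nq by (simp add: a_def norm_mult norm_power norm_powr_real_powr)
    also have "norm ((-z) gchoose j) = norm (pochhammer z j) / fact j"
      by (simp add: gbinomial_pochhammer norm_mult norm_divide norm_power)
    also have "(real n + q) powr (-Re z - real j) = (real n + q) powr (-Re z) / (real n + q) ^ j"
      using nq by (simp add: powr_diff powr_realpow)
    also have "norm (pochhammer z j) / fact j * ((real n + q) powr (-Re z) / (real n + q) ^ j) * \<bar>u\<bar> ^ j
             = (real n + q) powr (-Re z) * (norm (pochhammer z j) / fact j * (\<bar>u\<bar> / (real n + q)) ^ j)"
      by (simp add: power_divide)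
    also have "\<dots> \<le> (real n + q) powr (-Re z) * (pochhammer (norm z) j / fact j * r ^ j)"
    proof (intro mult_left_mono mult_mono divide_right_mono power_mono norm_pochhammer_le)
      show "\<bar>u\<bar> / (real n + q) \<le> r" unfolding r_def
        using nq q by (intro divide_left_mono) auto
    qed (use nq in \<open>auto intro!: pochhammer_real_nonneg divide_nonneg_nonneg\<close>)
    finally show ?thesis by (simp add: b_def)
  qed
  have n1: "summable (\<lambda>j. norm (a n j))" for n
    by (rule summable_comparison_test[OF _ sums_summable[OF bsum[of n]]]) (use ab in auto)
  have n2: "summable (\<lambda>n. norm (a n j))" for j
  proof (rule summable_comparison_test)
    show "summable (\<lambda>n. b n j)" unfolding b_def by (intro summable_mult2 sumRe)
  qed (use ab in auto)
  have n3: "summable (\<lambda>n. \<Sum>j. norm (a n j))"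
  proof (rule summable_comparison_test)
    show "summable (\<lambda>n. (real n + q) powr (-Re z) * E)" by (intro summable_mult2 sumRe)
    show "\<exists>N. \<forall>n\<ge>N. norm (\<Sum>j. norm (a n j)) \<le> (real n + q) powr (-Re z) * E"
    proof (intro exI allI impI)
      fix n :: nat
      have "(\<Sum>j. norm (a n j)) \<le> (\<Sum>j. b n j)"
        by (intro suminf_le ab n1 sums_summable[OF bsum])
      also have "\<dots> = (real n + q) powr (-Re z) * E" using bsum[of n] by (simp add: sums_iff)
      finally show "norm (\<Sum>j. norm (a n j)) \<le> (real n + q) powr (-Re z) * E"
        by (simp add: suminf_nonneg n1)
    qed
  qed
  have Asum: "(\<lambda>j. a n j) sums A n" for n
  proof -
    have "(\<lambda>j. ((-z) gchoose j) * complex_of_real (real n + q) powr (-z - of_nat j) * complex_of_real (-u) ^ j)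
            sums complex_of_real ((real n + q) + (-u)) powr (-z)"
      by (rule gen_binomial_complex'') (use u q in auto)
    hence "(\<lambda>j. a n j) sums ((-1)^n * complex_of_real ((real n + q) + (-u)) powr (-z))"
      unfolding a_def by (rule sums_mult)
    moreover have "(real n + q) + (-u) = real n + (q - u)" by simp
    ultimately show ?thesis by (simp only: A_def)
  qed
  have Bsum: "(\<lambda>n. a n j) sums Bj j" for j
  proof -
    have "(\<lambda>n. (-1)^n * complex_of_real (real n + q) powr (-(z + of_nat j))) sums zeta_E (z + of_nat j) q"
      by (rule zeta_E_sums) (use q z in auto)
    hence "(\<lambda>n. ((-z) gchoose j) * complex_of_real (-u) ^ j * ((-1)^n * complex_of_real (real n + q) powr (-(z + of_nat j))))
            sums (((-z) gchoose j) * complex_of_real (-u) ^ j * zeta_E (z + of_nat j) q)"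
      by (rule sums_mult)
    moreover have "-(z + of_nat j) = -z - of_nat j" by simp
    ultimately show ?thesis unfolding a_def Bj_def by (simp only: ac_simps)
  qed
  have "Bj sums (\<Sum>n. A n)" by (rule double_sum_swap[OF Asum Bsum n1 n2 n3])
  moreover have "(\<Sum>n. A n) = zeta_E z (q - u)"
    using zeta_E_sums[of "q - u" z] q u z by (simp add: A_def sums_iff)
  moreover have "Bj = tz q u z"
    unfolding Bj_def tz_def by (rule ext, subst gchoose_neg_pochhammer) simp
  ultimately show ?thesis by simp
qed

lemma taylor_zeta_E:
  assumes q: "q > 0" and u: "\<bar>u\<bar> < q"
  shows "(\<lambda>j. tz q u z j) sums zeta_E z (q - u)"
proof -
  have summ: "summable (\<lambda>j. tz q u z j)"
    by (rule summable_norm_cancel[OF tz_summable[OF q u]])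
  have "(\<lambda>z. (\<Sum>j. tz q u z j) - zeta_E z (q - u)) z = 0"
  proof (rule analytic_continuation[of "\<lambda>z. (\<Sum>j. tz q u z j) - zeta_E z (q - u)" UNIV "{z. Re z > 1}" 2])
    show "(\<lambda>z. (\<Sum>j. tz q u z j) - zeta_E z (q - u)) holomorphic_on UNIV"
      by (intro holomorphic_intros tz_holo[OF q u] zeta_E_holo) (use q u in auto)
    show "2 islimpt {z. Re z > 1}"
      by (rule open_imp_islimpt) (auto intro: open_halfspace_Re_gt)
    show "(\<Sum>j. tz q u z j) - zeta_E z (q - u) = 0" if "z \<in> {z. Re z > 1}" for z
      using taylor_Re_gt1[OF q u, of z] that by (simp add: sums_iff)
  qed auto
  hence "(\<Sum>j. tz q u z j) = zeta_E z (q - u)" by simp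
  with summ show ?thesis by (simp add: sums_iff)
qed

lemma integral_reflect01:
  fixes f :: "real \<Rightarrow> 'a::banach"
  shows "integral {0..1} (\<lambda>t. f (1 - t)) = integral {0..1} f"
proof -
  have "integral {0..1} (\<lambda>t. f (1 - t)) = integral {- 0..- (- 1)} (\<lambda>x. f (1 + - x))"
    by simp
  also have "\<dots> = integral {-1..0} (\<lambda>x. f (1 + x))"
    by (rule Henstock_Kurzweil_Integration.integral_reflect_real[of 0 "-1" "\<lambda>x. f (1 + x)"])
  also have "\<dots> = integral {-1..0} (f \<circ> (+) 1)" by (simp add: o_def)
  also have "\<dots> = integral {-1+1..0+1} f" by (rule integral_shift_Icc_real)
  finally show ?thesis by simp
qed

lemma integrable_beta_bound:
  fixes g :: "real \<Rightarrow> complex"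
  assumes cont: "continuous_on {0<..<1} g" and p: "p > 0" and s: "s > 0"
    and bound: "\<And>t. t \<in> {0<..<1} \<Longrightarrow> norm (g t) \<le> C * (t powr (p - 1) * (1 - t) powr (s - 1))"
  shows "g integrable_on {0..1}"
proof -
  have "(\<lambda>t. C * (t powr (p - 1) * (1 - t) powr (s - 1))) integrable_on {0..1}"
    by (intro integrable_on_mult_right integrable_Beta' p s)
  hence int: "(\<lambda>t. C * (t powr (p - 1) * (1 - t) powr (s - 1))) integrable_on {0<..<1}"
    by (simp add: integrable_on_def has_integral_Icc_iff_Ioo)
  have "g absolutely_integrable_on {0<..<1}"
    by (rule measurable_bounded_by_integrable_imp_absolutely_integrable[OF _ _ int bound])
       (auto intro: continuous_imp_measurable_on_sets_lebesgue[OF cont])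
  hence "g integrable_on {0<..<1}" by (rule set_lebesgue_integral_eq_integral(1))
  thus ?thesis by (simp add: integrable_on_def has_integral_Icc_iff_Ioo)
qed

lemma tendsto_integral_0_e:
  fixes g :: "real \<Rightarrow> real"
  assumes g: "g integrable_on {0..1}" and e: "e \<longlonglongrightarrow> 0" "\<And>n. e n \<in> {0..1}"
  shows "(\<lambda>n. integral {0..e n} g) \<longlonglongrightarrow> 0"
proof -
  have "continuous_on {0..1} (\<lambda>x. integral {0..x} g)"
    by (rule indefinite_integral_continuous_1[OF g])
  have "(\<lambda>n. integral {0..e n} g) \<longlonglongrightarrow> integral {0..0} g"
  proof -
    have c: "continuous (at 0 within {0..1}) (\<lambda>x. integral {0..x} g)"
      using \<open>continuous_on {0..1} _\<close> by (simp add: continuous_on_eq_continuous_within)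
    show ?thesis
      by (rule continuous_within_tendsto_compose[OF c _ e(1)]) (use e in auto)
  qed
  thus ?thesis by simp
qed

lemma tendsto_integral_x:
  fixes g :: "real \<Rightarrow> real"
  assumes g: "g integrable_on {0..1}" and x: "x \<longlonglongrightarrow> c" "\<And>n. x n \<in> {0..1}" "c \<in> {0..1}"
  shows "(\<lambda>n. integral {0..x n} g) \<longlonglongrightarrow> integral {0..c} g"
proof -
  have "continuous_on {0..1} (\<lambda>x. integral {0..x} g)"
    by (rule indefinite_integral_continuous_1[OF g])
  hence c: "continuous (at c within {0..1}) (\<lambda>x. integral {0..x} g)"
    using x(3) by (simp add: continuous_on_eq_continuous_within)
  show ?thesis
    by (rule continuous_within_tendsto_compose[OF c _ x(1)]) (use x in auto)
qed

lemma holo_param_integral: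
  fixes f f' :: "complex \<Rightarrow> real \<Rightarrow> complex"
  assumes oS: "open S" and cS: "convex S"
   and der: "\<And>a t. a \<in> S \<Longrightarrow> t \<in> {0<..<1} \<Longrightarrow> ((\<lambda>a. f a t) has_field_derivative f' a t) (at a)"
   and cont: "\<And>e. 0 < e \<Longrightarrow> e < 1/2 \<Longrightarrow> continuous_on (S \<times> {e..1-e}) (\<lambda>(a,t). f' a t)"
   and int: "\<And>a. a \<in> S \<Longrightarrow> f a integrable_on {0..1}"
   and dom: "\<And>a0. a0 \<in> S \<Longrightarrow> \<exists>r>0. cball a0 r \<subseteq> S \<and>
               (\<exists>g. g integrable_on {0..1} \<and> (\<forall>a\<in>cball a0 r. \<forall>t\<in>{0..1}. norm (f a t) \<le> g t))"
  shows "(\<lambda>a. integral {0..1} (f a)) holomorphic_on S"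
proof (rule holomorphic_uniform_sequence[OF oS])
  define e where "e = (\<lambda>n::nat. 1 / (real n + 3))"
  have e: "0 < e n" "e n < 1/2" for n
    by (auto simp: e_def field_simps)
  have "filterlim (\<lambda>n. real n + 3) at_top sequentially"
    using filterlim_tendsto_add_at_top[OF tendsto_const[of 3] filterlim_real_sequentially]
    by (simp add: add.commute)
  hence elim: "e \<longlonglongrightarrow> 0" unfolding e_def
    by (intro tendsto_divide_0[OF tendsto_const] filterlim_at_top_imp_at_infinity)
  show "(\<lambda>a. integral {e n..1 - e n} (f a)) holomorphic_on S" for n
  proof -
    have "(\<lambda>a. integral (cbox (e n) (1 - e n)) (f a)) holomorphic_on S"
    proof (rule leibniz_rule_holomorphic[where fx = f'])
      show "((\<lambda>a. f a t) has_field_derivative f' a t) (at a within S)"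
        if "a \<in> S" "t \<in> cbox (e n) (1 - e n)" for a t
        using der[of a t] that e[of n] by (auto intro: has_field_derivative_at_within)
      show "f a integrable_on cbox (e n) (1 - e n)" if "a \<in> S" for a
        using integrable_subinterval_real[OF int[OF that], of "e n" "1 - e n"] e[of n] by auto
      show "continuous_on (S \<times> cbox (e n) (1 - e n)) (\<lambda>(a, t). f' a t)"
        using cont[of "e n"] e[of n] by simp
    qed (rule cS)
    thus ?thesis by simp
  qed
  fix a0 assume a0: "a0 \<in> S"
  obtain r g where r: "r > 0" "cball a0 r \<subseteq> S" and g: "g integrable_on {0..1}"
    and gb: "\<And>a t. a \<in> cball a0 r \<Longrightarrow> t \<in> {0..1} \<Longrightarrow> norm (f a t) \<le> g t"
    using dom[OF a0] by blast
  define tl where "tl = (\<lambda>n. integral {0..e n} g + (integral {0..1} g - integral {0..1 - e n} g))"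
  have tl: "tl \<longlonglongrightarrow> integral {0..0} g + (integral {0..1} g - integral {0..1} g)"
    unfolding tl_def
  proof (intro tendsto_intros)
    show "(\<lambda>n. integral {0..e n} g) \<longlonglongrightarrow> integral {0..0} g"
    proof (rule tendsto_integral_x[OF g elim])
      show "e n \<in> {0..1}" for n using e[of n] by auto
    qed auto
    show "(\<lambda>n. integral {0..1 - e n} g) \<longlonglongrightarrow> integral {0..1} g"
    proof (rule tendsto_integral_x[OF g])
      show "1 - e n \<in> {0..1}" for n using e[of n] by auto
      show "(\<lambda>n. 1 - e n) \<longlonglongrightarrow> 1" using tendsto_diff[OF tendsto_const[of 1] elim] by simp
    qed auto
  qed
  hence tl0: "tl \<longlonglongrightarrow> 0" by simp
  have bound: "dist (integral {e n..1 - e n} (f a)) (integral {0..1} (f a)) \<le> tl n"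
    if a: "a \<in> cball a0 r" for a n
  proof -
    have fa: "f a integrable_on {0..1}" using int r a by auto
    have en: "0 \<le> e n" "e n \<le> 1 - e n" "1 - e n \<le> 1" using e[of n] by auto
    have I1: "integral {0..e n} (f a) + integral {e n..1} (f a) = integral {0..1} (f a)"
      by (rule Henstock_Kurzweil_Integration.integral_combine) (use en fa in auto)
    have I2: "integral {e n..1 - e n} (f a) + integral {1 - e n..1} (f a) = integral {e n..1} (f a)"
      by (rule Henstock_Kurzweil_Integration.integral_combine) (use en in \<open>auto intro: integrable_subinterval_real[OF fa]\<close>)
    have I3: "integral {0..1 - e n} g + integral {1 - e n..1} g = integral {0..1} g"
      by (rule Henstock_Kurzweil_Integration.integral_combine) (use en g in auto)
    have "dist (integral {e n..1 - e n} (f a)) (integral {0..1} (f a))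
          = norm (integral {0..e n} (f a) + integral {1 - e n..1} (f a))"
    proof -
      have "integral {e n..1 - e n} (f a) - integral {0..1} (f a) = - (integral {0..e n} (f a) + integral {1 - e n..1} (f a))"
        by (simp flip: I1 I2)
      thus ?thesis unfolding dist_norm by (simp only: norm_minus_cancel)
    qed
    also have "\<dots> \<le> norm (integral {0..e n} (f a)) + norm (integral {1 - e n..1} (f a))"
      by (rule norm_triangle_ineq)
    also have "norm (integral {0..e n} (f a)) \<le> integral {0..e n} g"
      by (rule integral_norm_bound_integral)
         (use en a gb in \<open>auto intro: integrable_subinterval_real[OF fa] integrable_subinterval_real[OF g]\<close>)
    also have "norm (integral {1 - e n..1} (f a)) \<le> integral {1 - e n..1} g"
      by (rule integral_norm_bound_integral)
         (use en a gb in \<open>auto intro: integrable_subinterval_real[OF fa] integrable_subinterval_real[OF g]\<close>)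
    also have "integral {0..e n} g + integral {1 - e n..1} g = tl n"
      unfolding tl_def using I3 by simp
    finally show ?thesis by simp
  qed
  have "uniform_limit (cball a0 r) (\<lambda>n a. integral {e n..1 - e n} (f a)) (\<lambda>a. integral {0..1} (f a)) sequentially"
  proof (rule uniform_limitI)
    fix \<epsilon> :: real assume "\<epsilon> > 0"
    hence "eventually (\<lambda>n. tl n < \<epsilon>) sequentially"
      using tl0 by (auto dest: order_tendstoD(2))
    thus "eventually (\<lambda>n. \<forall>a\<in>cball a0 r. dist (integral {e n..1 - e n} (f a)) (integral {0..1} (f a)) < \<epsilon>) sequentially"
    proof eventually_elim
      case (elim n)
      show ?case
      proof
        fix a assume "a \<in> cball a0 r"
        from bound[OF this, of n] elim show "dist (integral {e n..1 - e n} (f a)) (integral {0..1} (f a)) < \<epsilon>"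
          by linarith
      qed
    qed
  qed
  thus "\<exists>d>0. cball a0 d \<subseteq> S \<and> uniform_limit (cball a0 d) (\<lambda>n a. integral {e n..1 - e n} (f a)) (\<lambda>a. integral {0..1} (f a)) sequentially"
    using r by blast
qed

definition bt :: "complex \<Rightarrow> complex \<Rightarrow> real \<Rightarrow> complex" where
  "bt a b t = complex_of_real t powr (a - 1) * complex_of_real (1 - t) powr (b - 1)"

lemma norm_bt: "t \<in> {0..1} \<Longrightarrow> norm (bt a b t) = t powr (Re a - 1) * (1 - t) powr (Re b - 1)"
  by (simp add: bt_def norm_mult norm_powr_real_powr)

lemma bt_cont: "continuous_on {0<..<1} (bt a b)"
  unfolding bt_def by (intro continuous_intros) auto

lemma bt_integrable:
  assumes "Re a > 0" "Re b > 0"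
  shows "bt a b integrable_on {0..1}"
  by (rule integrable_beta_bound[OF bt_cont assms, where C=1]) (simp add: norm_bt)

lemma bt_swap: "integral {0..1} (bt a b) = integral {0..1} (bt b a)"
proof -
  have "integral {0..1} (bt b a) = integral {0..1} (\<lambda>t. bt b a (1 - t))"
    by (rule integral_reflect01[symmetric])
  also have "(\<lambda>t. bt b a (1 - t)) = bt a b" by (auto simp: bt_def fun_eq_iff)
  finally show ?thesis by simp
qed

lemma nonpos_Ints_Re_le: "z \<in> \<int>\<^sub>\<le>\<^sub>0 \<Longrightarrow> Re z \<le> 0"
  by (auto elim!: nonpos_Ints_cases)

lemma bt_holo_a:
  assumes b: "Re b > 0"
  shows "(\<lambda>a. integral {0..1} (bt a b)) holomorphic_on {a. Re a > 0}"
proof (rule holo_param_integral[where f' = "\<lambda>a t. Ln (complex_of_real t) * bt a b t"])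
  show "open {a. Re a > 0}" by (rule open_halfspace_Re_gt)
  show "convex {a. Re a > 0}" by (rule convex_halfspace_Re_gt)
  show "((\<lambda>a. bt a b t) has_field_derivative Ln (complex_of_real t) * bt a b t) (at a)"
    if "a \<in> {a. Re a > 0}" "t \<in> {0<..<1}" for a t
  proof -
    have "((\<lambda>a. complex_of_real t powr (a - 1)) has_field_derivative
            (Ln (complex_of_real t) * complex_of_real t powr (a - 1)) * 1) (at a)"
      by (rule DERIV_chain2[of "\<lambda>z. complex_of_real t powr z"])
         (use that in \<open>auto intro: has_field_derivative_powr_right derivative_eq_intros\<close>)
    from DERIV_cmult_right[OF this, of "complex_of_real (1 - t) powr (b - 1)"] show ?thesis
      by (simp add: bt_def mult_ac)
  qed
  show "continuous_on ({a. Re a > 0} \<times> {e..1-e}) (\<lambda>(a, t). Ln (complex_of_real t) * bt a b t)"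
    if "0 < e" "e < 1/2" for e :: real
    unfolding bt_def case_prod_unfold using that
    by (intro continuous_intros) (auto simp: complex_nonpos_Reals_iff)
  show "bt a b integrable_on {0..1}" if "a \<in> {a. Re a > 0}" for a
    using bt_integrable[of a b] that b by auto
  fix a0 assume a0: "a0 \<in> {a. Re a > 0}"
  define r where "r = Re a0 / 2"
  have r: "r > 0" using a0 by (simp add: r_def)
  have sub: "cball a0 r \<subseteq> {a. Re a > 0}"
  proof
    fix a assume "a \<in> cball a0 r"
    hence "Re (a0 - a) \<le> r" using complex_Re_le_cmod[of "a0 - a"] by (simp add: dist_norm)
    thus "a \<in> {a. Re a > 0}" using a0 by (simp add: r_def)
  qed
  define g where "g = (\<lambda>t. t powr (r - 1) * (1 - t) powr (Re b - 1))"
  have "g integrable_on {0..1}" unfolding g_def using r b by (intro integrable_Beta') auto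
  moreover have "\<forall>a\<in>cball a0 r. \<forall>t\<in>{0..1}. norm (bt a b t) \<le> g t"
  proof (intro ballI)
    fix a and t :: real assume a: "a \<in> cball a0 r" and t: "t \<in> {0..1}"
    have "Re (a0 - a) \<le> r" using a complex_Re_le_cmod[of "a0 - a"] by (simp add: dist_norm)
    hence Rea: "Re a \<ge> r" by (simp add: r_def)
    have "norm (bt a b t) = t powr (Re a - 1) * (1 - t) powr (Re b - 1)" by (rule norm_bt[OF t])
    also have "\<dots> \<le> g t" unfolding g_def
      by (intro mult_right_mono powr_mono') (use t Rea in auto)
    finally show "norm (bt a b t) \<le> g t" .
  qed
  ultimately show "\<exists>r>0. cball a0 r \<subseteq> {a. Re a > 0} \<and>
           (\<exists>g. g integrable_on {0..1} \<and> (\<forall>a\<in>cball a0 r. \<forall>t\<in>{0..1}. norm (bt a b t) \<le> g t))"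
    using r sub by blast
qed

lemma bt_holo_b:
  assumes a: "Re a > 0"
  shows "(\<lambda>b. integral {0..1} (bt a b)) holomorphic_on {b. Re b > 0}"
  using bt_holo_a[OF a] by (simp add: bt_swap[of a])

lemma islimpt_pos_reals: "(1::complex) islimpt (complex_of_real ` {0<..})"
proof (rule islimptI)
  fix T :: "complex set" assume T: "1 \<in> T" "open T"
  then obtain e where e: "e > 0" "ball 1 e \<subseteq> T" by (auto simp: open_contains_ball)
  define y where "y = complex_of_real (1 + e / 2)"
  have "y \<in> ball 1 e" using e by (simp add: y_def dist_norm)
  moreover have "y \<in> complex_of_real ` {0<..}" using e unfolding y_def by (intro imageI) auto
  moreover have "y \<noteq> 1" using e by (simp add: y_def)
  ultimately show "\<exists>y\<in>complex_of_real ` {0<..}. y \<in> T \<and> y \<noteq> 1" using e by blast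
qed

lemma beta_real_case:
  assumes "a > 0" "b > 0"
  shows "integral {0..1} (bt (of_real a) (of_real b)) = Beta (complex_of_real a) (complex_of_real b)"
proof -
  have "((\<lambda>t. complex_of_real (t powr (a - 1) * (1 - t) powr (b - 1))) has_integral complex_of_real (Beta a b)) {0..1}"
    by (rule has_integral_of_real[OF has_integral_Beta_real[OF assms]])
  hence "(bt (of_real a) (of_real b) has_integral complex_of_real (Beta a b)) {0..1}"
  proof (rule has_integral_eq[rotated])
    fix t :: real assume t: "t \<in> {0..1}"
    have e1: "complex_of_real t powr (complex_of_real a - 1) = complex_of_real (t powr (a-1))"
      using powr_of_real[of t "a-1"] t by simp
    have e2: "complex_of_real (1 - t) powr (complex_of_real b - 1) = complex_of_real ((1-t) powr (b-1))"
      using powr_of_real[of "1-t" "b-1"] t by simp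
    have "bt (of_real a) (of_real b) t = complex_of_real (t powr (a - 1) * (1 - t) powr (b - 1))"
      unfolding bt_def e1 e2 by simp
    thus "complex_of_real (t powr (a - 1) * (1 - t) powr (b - 1)) = bt (of_real a) (of_real b) t" by simp
  qed
  thus ?thesis by (simp add: integral_unique Beta_complex_of_real)
qed

lemma beta_complex:
  assumes a: "Re a > 0" and b: "Re b > 0"
  shows "(bt a b has_integral Beta a b) {0..1}"
proof -
  have nz: "z \<notin> \<int>\<^sub>\<le>\<^sub>0" if "Re z > 0" for z using nonpos_Ints_Re_le[of z] that by auto
  have step2: "integral {0..1} (bt a (of_real s)) = Beta a (of_real s)" if s: "s > 0" "Re a > 0" for a s
  proof -
    have "(\<lambda>a. integral {0..1} (bt a (of_real s)) - Beta a (of_real s)) a = 0"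
    proof (rule analytic_continuation[of "\<lambda>a. integral {0..1} (bt a (of_real s)) - Beta a (of_real s)"
              "{a. Re a > 0}" "complex_of_real ` {0<..}" 1])
      show "(\<lambda>a. integral {0..1} (bt a (of_real s)) - Beta a (of_real s)) holomorphic_on {a. Re a > 0}"
        using s by (intro holomorphic_intros bt_holo_a nz) auto
      show "integral {0..1} (bt z (of_real s)) - Beta z (of_real s) = 0" if "z \<in> complex_of_real ` {0<..}" for z
        using that beta_real_case[of _ s] s by auto
    qed (use s islimpt_pos_reals in \<open>auto intro: open_halfspace_Re_gt convex_connected convex_halfspace_Re_gt\<close>)
    thus ?thesis by simp
  qed
  have "(\<lambda>b. integral {0..1} (bt a b) - Beta a b) b = 0"
  proof (rule analytic_continuation[of "\<lambda>b. integral {0..1} (bt a b) - Beta a b"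
            "{b. Re b > 0}" "complex_of_real ` {0<..}" 1])
    show "(\<lambda>b. integral {0..1} (bt a b) - Beta a b) holomorphic_on {b. Re b > 0}"
      using a by (intro holomorphic_intros bt_holo_b nz) auto
    show "integral {0..1} (bt a z) - Beta a z = 0" if "z \<in> complex_of_real ` {0<..}" for z
      using that step2[of _ a] a by auto
  qed (use b islimpt_pos_reals in \<open>auto intro: open_halfspace_Re_gt convex_connected convex_halfspace_Re_gt\<close>)
  hence "integral {0..1} (bt a b) = Beta a b" by simp
  with bt_integrable[OF a b] show ?thesis
    using integrable_integral by fastforce
qed

lemma not_nonpos_Int_Re: "Re z > 0 \<Longrightarrow> z \<notin> \<int>\<^sub>\<le>\<^sub>0"
  using nonpos_Ints_Re_le[of z] by auto

lemma pochhammer_nz_Re: "Re z > 0 \<Longrightarrow> pochhammer z n \<noteq> 0"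
proof
  assume "Re z > 0" "pochhammer z n = 0"
  then obtain k where "z = - of_nat k" by (auto simp: pochhammer_eq_0_iff)
  with \<open>Re z > 0\<close> show False by simp
qed

lemma Beta_shift:
  assumes b: "Re b > 0" and d: "Re d > 0"
  shows "Beta (b + of_nat n) d = Beta b d * pochhammer b n / pochhammer (b + d) n"
proof -
  have bd: "Re (b + d) > 0" using b d by simp
  have G1: "Gamma (b + of_nat n) = pochhammer b n * Gamma b"
    using pochhammer_Gamma[OF not_nonpos_Int_Re[OF b], of n] not_nonpos_Int_Re[OF b]
    by (simp add: Gamma_eq_zero_iff field_simps)
  have G2: "Gamma (b + of_nat n + d) = pochhammer (b + d) n * Gamma (b + d)"
    using pochhammer_Gamma[OF not_nonpos_Int_Re[OF bd], of n] not_nonpos_Int_Re[OF bd]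
    by (simp add: Gamma_eq_zero_iff field_simps add_ac)
  have nz: "pochhammer (b + d) n \<noteq> 0" "Gamma (b + d) \<noteq> 0"
    using pochhammer_nz_Re[OF bd] not_nonpos_Int_Re[OF bd] by (auto simp: Gamma_eq_zero_iff)
  show ?thesis unfolding Beta_def G1 G2 using nz by (simp add: field_simps)
qed

lemma Beta_nz:
  assumes "Re b > 0" "Re d > 0"
  shows "Beta b d \<noteq> 0"
proof -
  have "Re (b + d) > 0" using assms by simp
  thus ?thesis using assms not_nonpos_Int_Re
    by (auto simp: Beta_def Gamma_eq_zero_iff)
qed

lemma bt_shift: "t \<in> {0..1} \<Longrightarrow> bt b d t * complex_of_real t ^ n = bt (b + of_nat n) d t"
proof -
  assume t: "t \<in> {0..1}"
  show ?thesis
  proof (cases "t = 0")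
    case True thus ?thesis by (cases n) (auto simp: bt_def)
  next
    case False
    hence "complex_of_real t \<noteq> 0" by simp
    hence "complex_of_real t powr (b + of_nat n - 1) = complex_of_real t powr ((b - 1) + of_nat n)"
      by (simp add: algebra_simps)
    also have "\<dots> = complex_of_real t powr (b - 1) * complex_of_real t ^ n"
      using \<open>complex_of_real t \<noteq> 0\<close> by (simp add: powr_add powr_nat')
    finally have "complex_of_real t powr (b - 1) * complex_of_real t ^ n = complex_of_real t powr (b + of_nat n - 1)" ..
    thus ?thesis by (simp add: bt_def mult_ac)
  qed
qed

lemma euler_2F1:
  assumes b: "Re b > 0" and d: "Re d > 0" and v: "norm v < 1"
  shows "((\<lambda>t. bt b d t * (1 - complex_of_real t * v) powr (-\<alpha>)) has_integral
            Beta b d * hyp2F1 \<alpha> b (b + d) v) {0..1}"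
proof -
  define c where "c = (\<lambda>n. pochhammer \<alpha> n / fact n * v ^ n)"
  define P where "P = (\<lambda>K t. bt b d t * (\<Sum>n<K. c n * complex_of_real t ^ n))"
  define A where "A = (1 - norm v) powr (- norm \<alpha>)"
  define ht where "ht = (\<lambda>n. pochhammer \<alpha> n * pochhammer b n / (pochhammer (b + d) n * fact n) * v ^ n)"
  define G where "G = (\<lambda>t. bt b d t * (1 - complex_of_real t * v) powr (-\<alpha>))"
  have Asum: "(\<lambda>n. pochhammer (norm \<alpha>) n / fact n * norm v ^ n) sums A"
    unfolding A_def by (rule binom_series_summable) (use v in auto)
  have cn: "norm (c n) \<le> pochhammer (norm \<alpha>) n / fact n * norm v ^ n" for n
  proof -
    have "norm (pochhammer \<alpha> n) / fact n \<le> pochhammer (norm \<alpha>) n / fact n"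
      by (rule divide_right_mono[OF norm_pochhammer_le]) simp
    thus ?thesis unfolding c_def norm_mult norm_divide norm_power
      by (intro mult_right_mono) auto
  qed
  have Pint: "(P K has_integral (\<Sum>n<K. c n * Beta (b + of_nat n) d)) {0..1}" for K
  proof -
    have "((\<lambda>t. \<Sum>n<K. c n * bt (b + of_nat n) d t) has_integral (\<Sum>n<K. c n * Beta (b + of_nat n) d)) {0..1}"
      by (intro has_integral_sum has_integral_mult_right beta_complex) (use b d in auto)
    thus ?thesis
    proof (rule has_integral_eq[rotated])
      fix t :: real assume t: "t \<in> {0..1}"
      show "(\<Sum>n<K. c n * bt (b + of_nat n) d t) = P K t"
        unfolding P_def sum_distrib_left by (intro sum.cong refl) (simp add: bt_shift[OF t, symmetric] mult_ac)
    qed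
  qed
  define h where "h = (\<lambda>t. A * (t powr (Re b - 1) * (1 - t) powr (Re d - 1)))"
  have hint: "h integrable_on {0..1}" unfolding h_def
    by (intro integrable_on_mult_right integrable_Beta') (use b d in auto)
  have bound: "norm (P K t) \<le> h t" if t: "t \<in> {0..1}" for K t
  proof -
    have "norm (\<Sum>n<K. c n * complex_of_real t ^ n) \<le> (\<Sum>n<K. norm (c n * complex_of_real t ^ n))"
      by (rule norm_sum)
    also have "\<dots> \<le> (\<Sum>n<K. pochhammer (norm \<alpha>) n / fact n * norm v ^ n)"
    proof (intro sum_mono)
      fix n assume "n \<in> {..<K}"
      have "norm (c n * complex_of_real t ^ n) = norm (c n) * t ^ n"
        using t by (simp add: norm_mult norm_power)
      also have "\<dots> \<le> norm (c n) * 1"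
        using t by (intro mult_left_mono power_le_one) auto
      also have "\<dots> \<le> pochhammer (norm \<alpha>) n / fact n * norm v ^ n" using cn[of n] by simp
      finally show "norm (c n * complex_of_real t ^ n) \<le> pochhammer (norm \<alpha>) n / fact n * norm v ^ n" .
    qed
    also have "\<dots> \<le> (\<Sum>n. pochhammer (norm \<alpha>) n / fact n * norm v ^ n)"
      by (rule sum_le_suminf) (use Asum in \<open>auto simp: sums_iff intro!: mult_nonneg_nonneg divide_nonneg_nonneg pochhammer_real_nonneg\<close>)
    also have "\<dots> = A" using Asum by (simp add: sums_iff)
    finally have "norm (\<Sum>n<K. c n * complex_of_real t ^ n) \<le> A" .
    hence "norm (P K t) \<le> norm (bt b d t) * A"
      unfolding P_def norm_mult by (intro mult_left_mono) auto
    also have "\<dots> = h t" using t by (simp add: norm_bt h_def mult_ac)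
    finally show ?thesis .
  qed
  have conv: "(\<lambda>K. P K t) \<longlonglongrightarrow> G t" if t: "t \<in> {0..1}" for t
  proof -
    have "norm (- (complex_of_real t * v)) < 1"
      using t v by (simp add: norm_mult) (meson le_less_trans mult_left_le_one_le norm_ge_zero)
    from gen_binomial_complex[OF this, of "-\<alpha>"]
    have "(\<lambda>n. ((-\<alpha>) gchoose n) * (- (complex_of_real t * v)) ^ n) sums (1 + - (complex_of_real t * v)) powr (-\<alpha>)" .
    moreover have "((-\<alpha>) gchoose n) * (- (complex_of_real t * v)) ^ n = c n * complex_of_real t ^ n" for n
      unfolding gchoose_neg_pochhammer c_def by (simp add: power_mult_distrib mult_ac)
    ultimately have "(\<lambda>n. c n * complex_of_real t ^ n) sums (1 - complex_of_real t * v) powr (-\<alpha>)" by simp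
    hence "(\<lambda>K. \<Sum>n<K. c n * complex_of_real t ^ n) \<longlonglongrightarrow> (1 - complex_of_real t * v) powr (-\<alpha>)"
      by (simp add: sums_def)
    thus ?thesis unfolding P_def G_def by (intro tendsto_mult_left)
  qed
  have Pint': "P K integrable_on {0..1}" for K using Pint[of K] by blast
  note DC = dominated_convergence[OF Pint' hint bound conv]
  have eqK: "integral {0..1} (P K) = (\<Sum>n<K. Beta b d * ht n)" for K
  proof -
    have "integral {0..1} (P K) = (\<Sum>n<K. c n * Beta (b + of_nat n) d)"
      using Pint[of K] by (simp add: integral_unique)
    also have "\<dots> = (\<Sum>n<K. Beta b d * ht n)"
      by (intro sum.cong refl) (simp add: Beta_shift[OF b d] c_def ht_def field_simps)
    finally show ?thesis .
  qed
  have "(\<lambda>n. Beta b d * ht n) sums integral {0..1} G"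
    using DC(2) unfolding sums_def eqK .
  hence "ht sums (integral {0..1} G / Beta b d)"
    using Beta_nz[OF b d] sums_mult_iff[of "Beta b d" ht "integral {0..1} G / Beta b d"] by simp
  hence "hyp2F1 \<alpha> b (b + d) v = integral {0..1} G / Beta b d"
    unfolding hyp2F1_def ht_def by (simp add: sums_iff)
  hence "Beta b d * hyp2F1 \<alpha> b (b + d) v = integral {0..1} G"
    using Beta_nz[OF b d] by simp
  with DC(1) show ?thesis unfolding G_def[symmetric]
    using integrable_integral by fastforce
qed

theorem proposition5p2:
  fixes z \<alpha> \<beta> \<delta> v :: complex and q x :: real
  assumes "Re \<delta> > -1" and "Re \<beta> > -1" and "q > 0" and "\<bar>x\<bar> < q" and "norm v < 1"
  defines "F \<equiv> (\<lambda>t::real. complex_of_real t powr \<beta> * complex_of_real (1 - t) powr \<delta>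
                 * (1 - complex_of_real t * v) powr (- \<alpha>)
                 * (zeta_E z (q - x * t) - zeta_E z q))"
  shows "F integrable_on {0..1} \<and>
         ((\<lambda>j. pochhammer z (Suc j) / fact (Suc j)
              * Beta (\<beta> + of_nat (Suc j) + 1) (\<delta> + 1)
              * hyp2F1 \<alpha> (\<beta> + of_nat (Suc j) + 1) (\<delta> + \<beta> + of_nat (Suc j) + 2) v
              * zeta_E (z + of_nat (Suc j)) q * complex_of_real x ^ Suc j)
          sums integral {0..1} F)"
proof -
  note d = assms(1) and b = assms(2) and q = assms(3) and x = assms(4) and v = assms(5)
  define w where "w = (\<lambda>t. bt (\<beta> + 1) (\<delta> + 1) t * (1 - complex_of_real t * v) powr (-\<alpha>))"
  define a where "a = (\<lambda>j. tz q x z (Suc j))"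
  define I where "I = (\<lambda>j::nat. Beta (\<beta> + 1 + of_nat (Suc j)) (\<delta> + 1)
                  * hyp2F1 \<alpha> (\<beta> + 1 + of_nat (Suc j)) (\<beta> + 1 + of_nat (Suc j) + (\<delta> + 1)) v)"
  define D where "D = (\<lambda>t. zeta_E z (q - x * t) - zeta_E z q)"
  define f where "f = (\<lambda>K t. w t * (\<Sum>j<K. a j * complex_of_real t ^ Suc j))"
  have FwD: "F = (\<lambda>t. w t * D t)"
    by (rule ext) (simp add: F_def w_def D_def bt_def mult_ac)
  have Iint: "((\<lambda>t. w t * complex_of_real t ^ Suc j) has_integral I j) {0..1}" for j
  proof -
    have "((\<lambda>t. bt (\<beta> + 1 + of_nat (Suc j)) (\<delta> + 1) t * (1 - complex_of_real t * v) powr (-\<alpha>)) has_integral I j) {0..1}"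
      unfolding I_def by (rule euler_2F1) (use b d v in auto)
    thus ?thesis
    proof (rule has_integral_eq[rotated])
      fix t :: real assume t: "t \<in> {0..1}"
      show "bt (\<beta> + 1 + of_nat (Suc j)) (\<delta> + 1) t * (1 - complex_of_real t * v) powr (-\<alpha>) =
            w t * complex_of_real t ^ Suc j"
        unfolding w_def bt_shift[OF t, symmetric] by (simp add: mult_ac)
    qed
  qed
  have fint: "(f K has_integral (\<Sum>j<K. a j * I j)) {0..1}" for K
  proof -
    have "((\<lambda>t. \<Sum>j<K. a j * (w t * complex_of_real t ^ Suc j)) has_integral (\<Sum>j<K. a j * I j)) {0..1}"
      by (intro has_integral_sum has_integral_mult_right Iint) auto
    moreover have "(\<lambda>t. \<Sum>j<K. a j * (w t * complex_of_real t ^ Suc j)) = f K"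
      by (rule ext) (simp add: f_def sum_distrib_left mult_ac)
    ultimately show ?thesis by simp
  qed
  have asum: "summable (\<lambda>j. norm (a j))"
    unfolding a_def using summable_ignore_initial_segment[OF tz_summable[OF q x, of z], of 1] by simp
  define Aa where "Aa = (\<Sum>j. norm (a j))"
  have cont: "continuous_on {0..1} (\<lambda>t. (1 - complex_of_real t * v) powr (-\<alpha>))"
  proof (intro continuous_intros)
    show "{0..1} \<subseteq> {t. 0 \<le> Re (1 - complex_of_real t * v) \<or> Im (1 - complex_of_real t * v) \<noteq> 0}"
    proof
      fix t :: real assume t: "t \<in> {0..1}"
      have "Re (complex_of_real t * v) \<le> norm (complex_of_real t * v)" by (rule complex_Re_le_cmod)
      also have "\<dots> \<le> norm v" using t by (simp add: norm_mult mult_left_le_one_le)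
      finally show "t \<in> {t. 0 \<le> Re (1 - complex_of_real t * v) \<or> Im (1 - complex_of_real t * v) \<noteq> 0}"
        using v by simp
    qed
    show "Re (- \<alpha>) > 0" if "t \<in> {0..1}" "1 - complex_of_real t * v = 0" for t
    proof -
      have "norm (complex_of_real t * v) < 1" using that(1) v by (simp add: norm_mult) (meson le_less_trans mult_left_le_one_le norm_ge_zero)
      moreover have "complex_of_real t * v = 1" using that(2) by simp
      ultimately show ?thesis by simp
    qed
  qed
  have "bounded ((\<lambda>t. (1 - complex_of_real t * v) powr (-\<alpha>)) ` {0..1})"
    by (intro compact_imp_bounded compact_continuous_image cont) auto
  then obtain Mw where Mw: "Mw > 0" "\<And>t. t \<in> {0..1} \<Longrightarrow> norm ((1 - complex_of_real t * v) powr (-\<alpha>)) \<le> Mw"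
    by (auto simp: bounded_pos)
  define h where "h = (\<lambda>t. Mw * Aa * (t powr (Re \<beta> + 1 - 1) * (1 - t) powr (Re \<delta> + 1 - 1)))"
  have hint: "h integrable_on {0..1}" unfolding h_def
    by (intro integrable_on_mult_right integrable_Beta') (use b d in auto)
  have bound: "norm (f K t) \<le> h t" if t: "t \<in> {0..1}" for K t
  proof -
    have "norm (\<Sum>j<K. a j * complex_of_real t ^ Suc j) \<le> (\<Sum>j<K. norm (a j * complex_of_real t ^ Suc j))"
      by (rule norm_sum)
    also have "\<dots> \<le> (\<Sum>j<K. norm (a j))"
    proof (intro sum_mono)
      fix j assume "j \<in> {..<K}"
      have "norm (a j * complex_of_real t ^ Suc j) = norm (a j) * t ^ Suc j"
        using t by (simp add: norm_mult norm_power)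
      also have "\<dots> \<le> norm (a j) * 1"
        using t by (intro mult_left_mono power_le_one) auto
      finally show "norm (a j * complex_of_real t ^ Suc j) \<le> norm (a j)" by simp
    qed
    also have "\<dots> \<le> Aa" unfolding Aa_def
      by (rule sum_le_suminf[OF asum]) auto
    finally have S: "norm (\<Sum>j<K. a j * complex_of_real t ^ Suc j) \<le> Aa" .
    have "norm (f K t) = norm (bt (\<beta> + 1) (\<delta> + 1) t) * norm ((1 - complex_of_real t * v) powr (-\<alpha>))
                        * norm (\<Sum>j<K. a j * complex_of_real t ^ Suc j)"
      by (simp add: f_def w_def norm_mult)
    also have "\<dots> \<le> norm (bt (\<beta> + 1) (\<delta> + 1) t) * Mw * Aa"
      using Mw(1) by (intro mult_mono Mw(2) t S) auto
    also have "\<dots> = h t" using t by (simp add: norm_bt h_def mult_ac)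
    finally show ?thesis .
  qed
  have conv: "(\<lambda>K. f K t) \<longlonglongrightarrow> w t * D t" if t: "t \<in> {0..1}" for t
  proof -
    have "\<bar>x\<bar> * t \<le> \<bar>x\<bar> * 1" using t by (intro mult_left_mono) auto
    hence xt: "\<bar>x * t\<bar> < q" using t x by (simp add: abs_mult)
    have "(\<lambda>j. tz q (x * t) z j) sums zeta_E z (q - x * t)"
      by (rule taylor_zeta_E[OF q xt])
    hence "(\<lambda>j. tz q (x * t) z (Suc j)) sums (zeta_E z (q - x * t) - tz q (x * t) z 0)"
      by (subst sums_Suc_iff) simp
    moreover have "tz q (x * t) z 0 = zeta_E z q" by (simp add: tz_def)
    moreover have "tz q (x * t) z (Suc j) = a j * complex_of_real t ^ Suc j" for j
      by (simp add: a_def tz_def power_mult_distrib mult_ac)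
    ultimately have "(\<lambda>j. a j * complex_of_real t ^ Suc j) sums D t" by (simp add: D_def)
    hence "(\<lambda>K. \<Sum>j<K. a j * complex_of_real t ^ Suc j) \<longlonglongrightarrow> D t" by (simp add: sums_def)
    thus ?thesis unfolding f_def by (intro tendsto_mult_left)
  qed
  have fint': "f K integrable_on {0..1}" for K using fint[of K] by blast
  note DC = dominated_convergence[OF fint' hint bound conv]
  have "(\<lambda>K. \<Sum>j<K. a j * I j) \<longlonglongrightarrow> integral {0..1} F"
  proof -
    have "integral {0..1} (f K) = (\<Sum>j<K. a j * I j)" for K using fint[of K] by (rule integral_unique)
    thus ?thesis using DC(2) unfolding FwD by simp
  qed
  hence S: "(\<lambda>j. a j * I j) sums integral {0..1} F" by (simp add: sums_def)
  have T: "pochhammer z (Suc j) / fact (Suc j)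
              * Beta (\<beta> + of_nat (Suc j) + 1) (\<delta> + 1)
              * hyp2F1 \<alpha> (\<beta> + of_nat (Suc j) + 1) (\<delta> + \<beta> + of_nat (Suc j) + 2) v
              * zeta_E (z + of_nat (Suc j)) q * complex_of_real x ^ Suc j = a j * I j" for j
  proof -
    have e1: "\<beta> + of_nat (Suc j) + 1 = \<beta> + 1 + of_nat (Suc j)" by (simp add: add_ac)
    have e2: "\<delta> + \<beta> + of_nat (Suc j) + 2 = \<beta> + 1 + of_nat (Suc j) + (\<delta> + 1)" by (simp add: add_ac)
    show ?thesis unfolding e1 e2 a_def I_def tz_def by (simp only: mult_ac)
  qed
  have "F integrable_on {0..1}" using DC(1) FwD by simp
  with S T show ?thesis by simp
qed

end
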